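(* Let $(X,d)$ be a complete metric space endowed with a continuous $k$-mean $\mu$ that is weakly $\beta$-contractive. If $X$ is uniformly locally convex (with respect to $\mu$), then the barycentric operator $\beta$ of $\mu$ is power convergent, so that $\mu$ has a $\beta$-extension.
   Context: A $k$-mean is a map $\mu:X^k\to X$ with $\mu(x,\ldots,x)=x$. Barycentric operator: $\beta:X^{k+1}\to X^{k+1}$, $\beta(\mathbf{x})_j=\mu(x_1,\ldots,x_{j-1},x_{j+1},\ldots,x_{k+1})$. $\Delta(\mathbf{x})=\max_{i,j}d(x_i,x_j)$; $\mu$ is weakly $\beta$-contractive if $\Delta(\beta^n(\mathbf{x}))\to0$ for all $\mathbf{x}\in X^{k+1}$. A subset $C$ is convex if $\mu(x_1,\ldots,x_k)\in C$ whenever $x_1,\ldots,x_k\in C$; the convex hull of $A$ is the smallest convex set containing $A$. $X$ is uniformly locally convex if for each $\varepsilon>0$ there is $\delta>0$ such that the convex hull of any set $A$ of diameter less than $\delta$ has diameter less than $\varepsilon$. $\beta$ is power convergent if for each $\mathbf{x}$, $\beta^n(\mathbf{x})\to(x^*,\ldots,x^* )$ for some $x^*$; a $(k+1)$-mean $\nu$ is a $\beta$-extension of $\mu$ if $\beta^n(\mathbf{x})\to(\nu(\mathbf{x}),\ldots,\nu(\mathbf{x}))$ for all $\mathbf{x}$. *)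

theory Defs
  imports "HOL-Analysis.Analysis"
begin

text \<open>Points of X^k are represented as lists of length k. A k-mean is a map
  mu on lists; only its values on lists of length k matter.\<close>

definition is_mean :: "nat \<Rightarrow> ('a list \<Rightarrow> 'a) \<Rightarrow> bool" where
  "is_mean k mu \<longleftrightarrow> (\<forall>x. mu (replicate k x) = x)"

text \<open>Continuity of mu on X^k (product topology), stated sequentially (X is metric).\<close>
definition mean_continuous :: "nat \<Rightarrow> ('a::metric_space list \<Rightarrow> 'a) \<Rightarrow> bool" where
  "mean_continuous k mu \<longleftrightarrow>
     (\<forall>xs S. length xs = k \<and> (\<forall>n. length (S n) = k) \<and>
        (\<forall>i<k. (\<lambda>n. S n ! i) \<longlonglongrightarrow> xs ! i)
        \<longrightarrow> (\<lambda>n. mu (S n)) \<longlonglongrightarrow> mu xs)"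

definition bary :: "('a list \<Rightarrow> 'a) \<Rightarrow> 'a list \<Rightarrow> 'a list" where
  "bary mu xs = map (\<lambda>j. mu (take j xs @ drop (Suc j) xs)) [0..<length xs]"

definition Delta :: "'a::metric_space list \<Rightarrow> real" where
  "Delta xs = Max {dist (xs ! i) (xs ! j) | i j. i < length xs \<and> j < length xs}"

definition weakly_beta_contractive :: "nat \<Rightarrow> ('a::metric_space list \<Rightarrow> 'a) \<Rightarrow> bool" where
  "weakly_beta_contractive k mu \<longleftrightarrow>
     (\<forall>xs. length xs = Suc k \<longrightarrow> (\<lambda>n. Delta ((bary mu ^^ n) xs)) \<longlonglongrightarrow> 0)"

definition mu_convex :: "nat \<Rightarrow> ('a list \<Rightarrow> 'a) \<Rightarrow> 'a set \<Rightarrow> bool" where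
  "mu_convex k mu C \<longleftrightarrow> (\<forall>xs. length xs = k \<and> set xs \<subseteq> C \<longrightarrow> mu xs \<in> C)"

text \<open>Convex hull = (mu_convex k mu) hull A. Diameter is only meaningful for bounded
  sets, so "diameter < d" is rendered as "bounded and diameter < d".\<close>
definition unif_locally_convex :: "nat \<Rightarrow> ('a::metric_space list \<Rightarrow> 'a) \<Rightarrow> bool" where
  "unif_locally_convex k mu \<longleftrightarrow>
     (\<forall>\<epsilon>>0. \<exists>\<delta>>0. \<forall>A. bounded A \<and> diameter A < \<delta> \<longrightarrow>
        bounded (mu_convex k mu hull A) \<and> diameter (mu_convex k mu hull A) < \<epsilon>)"

definition power_convergent :: "nat \<Rightarrow> ('a::metric_space list \<Rightarrow> 'a) \<Rightarrow> bool" where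
  "power_convergent k mu \<longleftrightarrow>
     (\<forall>xs. length xs = Suc k \<longrightarrow>
        (\<exists>x. \<forall>i<Suc k. (\<lambda>n. (bary mu ^^ n) xs ! i) \<longlonglongrightarrow> x))"

definition beta_extension :: "nat \<Rightarrow> ('a::metric_space list \<Rightarrow> 'a) \<Rightarrow> ('a list \<Rightarrow> 'a) \<Rightarrow> bool" where
  "beta_extension k mu nu \<longleftrightarrow> is_mean (Suc k) nu \<and>
     (\<forall>xs. length xs = Suc k \<longrightarrow>
        (\<forall>i<Suc k. (\<lambda>n. (bary mu ^^ n) xs ! i) \<longlonglongrightarrow> nu xs))"

end

theory Submission
  imports Defs
begin

lemma diam_le_metric:
  fixes S :: "'a::metric_space set"
  assumes "S \<noteq> {}" "\<And>x y. x \<in> S \<Longrightarrow> y \<in> S \<Longrightarrow> dist x y \<le> d"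
  shows "diameter S \<le> d"
  using assms unfolding diameter_def by (auto intro!: cSUP_least)

lemma dist_le_Delta:
  fixes xs :: "'a::metric_space list"
  assumes "i < length xs" "j < length xs"
  shows "dist (xs ! i) (xs ! j) \<le> Delta xs"
proof -
  have "{dist (xs ! i) (xs ! j) | i j. i < length xs \<and> j < length xs}
        = (\<lambda>(i,j). dist (xs ! i) (xs ! j)) ` ({..<length xs} \<times> {..<length xs})"
    by auto
  hence fin: "finite {dist (xs ! i) (xs ! j) | i j. i < length xs \<and> j < length xs}"
    by simp
  show ?thesis unfolding Delta_def
    by (rule Max_ge[OF fin]) (use assms in blast)
qed

lemma diam_set_le_Delta:
  fixes xs :: "'a::metric_space list"
  assumes "xs \<noteq> []"
  shows "diameter (set xs) \<le> Delta xs"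
proof (rule diam_le_metric)
  show "set xs \<noteq> {}" using assms by simp
  fix x y assume "x \<in> set xs" "y \<in> set xs"
  then obtain i j where "i < length xs" "j < length xs" "x = xs ! i" "y = xs ! j"
    by (metis in_set_conv_nth)
  thus "dist x y \<le> Delta xs" using dist_le_Delta by blast
qed

lemma length_bary [simp]: "length (bary mu xs) = length xs"
  by (simp add: bary_def)

lemma length_bary_pow [simp]: "length ((bary mu ^^ n) xs) = length xs"
  by (induction n) auto

lemma hull_convex: "mu_convex k mu (mu_convex k mu hull A)"
proof (subst mu_convex_def, intro allI impI)
  fix xs assume a: "length xs = k \<and> set xs \<subseteq> mu_convex k mu hull A"
  show "mu xs \<in> mu_convex k mu hull A" unfolding hull_def
  proof (rule InterI)
    fix T assume "T \<in> {t. mu_convex k mu t \<and> A \<subseteq> t}"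
    hence T: "mu_convex k mu T" "A \<subseteq> T" by auto
    have "mu_convex k mu hull A \<subseteq> T" by (rule hull_minimal[of A T "mu_convex k mu", OF T(2) T(1)])
    with a have "set xs \<subseteq> T" by blast
    with a T(1) show "mu xs \<in> T" unfolding mu_convex_def by blast
  qed
qed

lemma bary_in_hull:
  assumes "length ys = Suc k" "i < Suc k"
  shows "bary mu ys ! i \<in> mu_convex k mu hull set ys"
proof -
  have e: "bary mu ys ! i = mu (take i ys @ drop (Suc i) ys)"
    using assms by (simp add: bary_def del: upt_Suc)
  have "set (take i ys @ drop (Suc i) ys) \<subseteq> set ys"
    by (auto dest: in_set_takeD in_set_dropD)
  also have "\<dots> \<subseteq> mu_convex k mu hull set ys" by (rule hull_subset)
  finally have s: "set (take i ys @ drop (Suc i) ys) \<subseteq> mu_convex k mu hull set ys" .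
  have l: "length (take i ys @ drop (Suc i) ys) = k" using assms by simp
  have "mu (take i ys @ drop (Suc i) ys) \<in> mu_convex k mu hull set ys"
    using hull_convex[of k mu "set ys"] s l unfolding mu_convex_def by blast
  thus ?thesis using e by simp
qed

lemma hull_step:
  assumes "length ys = Suc k"
  shows "mu_convex k mu hull set (bary mu ys) \<subseteq> mu_convex k mu hull set ys"
proof (rule hull_minimal)
  show "set (bary mu ys) \<subseteq> mu_convex k mu hull set ys"
    using bary_in_hull[OF assms] assms by (auto simp: in_set_conv_nth)
  show "mu_convex k mu (mu_convex k mu hull set ys)" by (rule hull_convex)
qed

lemma main_conv:
  fixes mu :: "'a::complete_space list \<Rightarrow> 'a"
  assumes wbc: "weakly_beta_contractive k mu"
    and ulc: "unif_locally_convex k mu"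
    and len: "length xs = Suc k"
  shows "\<exists>L. \<forall>i<Suc k. (\<lambda>n. (bary mu ^^ n) xs ! i) \<longlonglongrightarrow> L"
proof -
  define B where "B n = (bary mu ^^ n) xs" for n
  define C where "C n = mu_convex k mu hull set (B n)" for n
  have lenB: "length (B n) = Suc k" for n using len by (simp add: B_def)
  have Cstep: "C (Suc n) \<subseteq> C n" for n
    using hull_step[OF lenB[of n]] by (simp add: C_def B_def)
  have Cmono: "C n \<subseteq> C m" if "m \<le> n" for m n
    by (rule lift_Suc_antimono_le[of C, OF Cstep that])
  have inC: "B n ! i \<in> C m" if "m \<le> n" "i < Suc k" for m n i
  proof -
    have "B n ! i \<in> set (B n)" using that lenB by simp
    hence "B n ! i \<in> C n" unfolding C_def using hull_subset[of "set (B n)" "mu_convex k mu"] by (rule subsetD[rotated])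
    thus ?thesis using Cmono[OF that(1)] by (rule rev_subsetD)
  qed
  have small: "\<exists>N. bounded (C N) \<and> diameter (C N) < e" if "e > 0" for e
  proof -
    obtain d where d: "d > 0" "\<And>A. bounded A \<and> diameter A < d \<Longrightarrow>
        bounded (mu_convex k mu hull A) \<and> diameter (mu_convex k mu hull A) < e"
      using ulc \<open>e > 0\<close> unfolding unif_locally_convex_def by meson
    have "(\<lambda>n. Delta (B n)) \<longlonglongrightarrow> 0"
      using wbc len unfolding weakly_beta_contractive_def B_def by blast
    then obtain N where "\<forall>n\<ge>N. norm (Delta (B n) - 0) < d"
      using LIMSEQ_D d(1) by blast
    hence "Delta (B N) < d" by auto
    moreover have "diameter (set (B N)) \<le> Delta (B N)"
      using lenB[of N] by (intro diam_set_le_Delta) auto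
    ultimately have "bounded (set (B N)) \<and> diameter (set (B N)) < d"
      by (simp add: finite_imp_bounded)
    thus ?thesis using d(2) unfolding C_def by blast
  qed
  have "Cauchy (\<lambda>n. B n ! 0)"
  proof (rule metric_CauchyI)
    fix e :: real assume "e > 0"
    then obtain N where N: "bounded (C N)" "diameter (C N) < e" using small by blast
    show "\<exists>M. \<forall>m\<ge>M. \<forall>n\<ge>M. dist (B m ! 0) (B n ! 0) < e"
    proof (intro exI allI impI)
      fix m n assume "N \<le> m" "N \<le> n"
      hence "dist (B m ! 0) (B n ! 0) \<le> diameter (C N)"
        using N(1) inC[of N m 0] inC[of N n 0] by (intro diameter_bounded_bound) auto
      thus "dist (B m ! 0) (B n ! 0) < e" using N(2) by simp
    qed
  qed
  then obtain L where L: "(\<lambda>n. B n ! 0) \<longlonglongrightarrow> L"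
    using Cauchy_convergent_iff convergent_def by blast
  have "(\<lambda>n. B n ! i) \<longlonglongrightarrow> L" if i: "i < Suc k" for i
  proof (rule metric_LIMSEQ_I)
    fix e :: real assume e: "e > 0"
    then obtain N1 where N1: "bounded (C N1)" "diameter (C N1) < e/2"
      using small[of "e/2"] by auto
    obtain N2 where N2: "\<forall>n\<ge>N2. dist (B n ! 0) L < e/2"
      using metric_LIMSEQ_D[OF L, of "e/2"] e by auto
    show "\<exists>no. \<forall>n\<ge>no. dist (B n ! i) L < e"
    proof (intro exI allI impI)
      fix n assume n: "max N1 N2 \<le> n"
      have "dist (B n ! i) (B n ! 0) \<le> diameter (C N1)"
        using N1(1) inC[of N1 n i] inC[of N1 n 0] n i by (intro diameter_bounded_bound) auto
      moreover have "dist (B n ! 0) L < e/2" using N2 n by auto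
      moreover have "dist (B n ! i) L \<le> dist (B n ! i) (B n ! 0) + dist (B n ! 0) L"
        by (rule dist_triangle)
      ultimately show "dist (B n ! i) L < e" using N1(2) by linarith
    qed
  qed
  thus ?thesis unfolding B_def by blast
qed

lemma bary_replicate:
  assumes "is_mean k mu"
  shows "bary mu (replicate (Suc k) x) = replicate (Suc k) x"
proof -
  have "take j (replicate (Suc k) x) @ drop (Suc j) (replicate (Suc k) x) = replicate k x"
    if "j < Suc k" for j
    using that by (simp add: take_replicate drop_replicate replicate_add[symmetric] del: replicate_Suc)
  thus ?thesis using assms unfolding bary_def is_mean_def
    by (intro nth_equalityI) (auto simp del: replicate_Suc upt_Suc)
qed

theorem proposition3p9:
  fixes k :: nat and mu :: "'a::complete_space list \<Rightarrow> 'a"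
  assumes "is_mean k mu"
    and "mean_continuous k mu"
    and "weakly_beta_contractive k mu"
    and "unif_locally_convex k mu"
  shows "power_convergent k mu \<and> (\<exists>nu. beta_extension k mu nu)"
proof -
  have conv: "\<exists>L. \<forall>i<Suc k. (\<lambda>n. (bary mu ^^ n) xs ! i) \<longlonglongrightarrow> L"
    if "length xs = Suc k" for xs
    using main_conv[OF assms(3,4) that] .
  define nu where "nu xs = (SOME L. \<forall>i<Suc k. (\<lambda>n. (bary mu ^^ n) xs ! i) \<longlonglongrightarrow> L)"
    for xs
  have nu: "\<forall>i<Suc k. (\<lambda>n. (bary mu ^^ n) xs ! i) \<longlonglongrightarrow> nu xs"
    if "length xs = Suc k" for xs
    unfolding nu_def using someI_ex[OF conv[OF that]] .
  have "is_mean (Suc k) nu"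
    unfolding is_mean_def
  proof
    fix x
    have fx: "(bary mu ^^ n) (replicate (Suc k) x) = replicate (Suc k) x" for n
      by (induction n) (simp_all add: bary_replicate[OF assms(1)] del: replicate_Suc)
    have "(\<lambda>n. (bary mu ^^ n) (replicate (Suc k) x) ! 0) \<longlonglongrightarrow> nu (replicate (Suc k) x)"
      using nu[of "replicate (Suc k) x"] by (simp del: replicate_Suc)
    hence "(\<lambda>n. x) \<longlonglongrightarrow> nu (replicate (Suc k) x)" by (simp add: fx del: replicate_Suc)
    thus "nu (replicate (Suc k) x) = x" using LIMSEQ_unique tendsto_const by blast
  qed
  hence "beta_extension k mu nu" unfolding beta_extension_def using nu by blast
  moreover have "power_convergent k mu" unfolding power_convergent_def using conv by blast
  ultimately show ?thesis by blast
qed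

end
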